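(* In the setting of the context, let $(e_i)_{i=1}^d$ be an orthonormal basis of $\mathbb C^d$ and assume: for each $a\in\mathcal A$ there is a deterministic map $f_a:\{1,\dots,d\}\to\{1,\dots,d\}$ such that for $\mathbb P$-a.e. $\omega$ and every $i$, $V_{a;\omega}e_i\in\mathbb C e_{f_a(i)}$, and $\langle V_{a;\omega}e_i,V_{a;\omega}e_j\rangle=0$ whenever $i\ne j$. Suppose there exist $L\in\mathbb N$ and $\varepsilon>0$ such that for $\mathbb P$-a.e. $\omega$ and all $i,j\in\{1,\dots,d\}$, $$\sum_{k=1}^d\min\{\overline P^{(L)}_\omega(i,k),\overline P^{(L)}_\omega(j,k)\}\ge\varepsilon,$$ where $P^{(L)}_{\omega,i}:=\mathbb Q_{\rho^{(i)};\omega}\circ A_{1:L}^{-1}\in\mathcal P(\mathcal A^L)$ with $\rho^{(i)}=|e_i\rangle\langle e_i|$, and $\overline P^{(L)}_\omega(i,k):=\sum_{u\in\mathcal A^L:f_u(i)=k}P^{(L)}_{\omega,i}(u)$. Then there exist, for each $(i,j)\in\{1,\dots,d\}^2$, $\mathcal F$-measurable maps $\omega\mapsto\kappa_{\omega;i,j}\in\mathcal P(\mathcal A^L\times\mathcal A^L)$ such that for $\mathbb P$-a.e. $\omega$ and all $i,j$, $\kappa_{\omega;i,j}$ is a coupling of $\mathbb Q_{\rho^{(i)};\omega}\circ A_{1:L}^{-1}$ and $\mathbb Q_{\rho^{(j)};\omega}\circ A_{1:L}^{-1}$ and $$\kappa_{\omega;i,j}\big(\{(u,v)\in\mathcal A^L\times\mathcal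 A^L: f_u(i)=f_v(j)\}\big)\ge\varepsilon$$ (with the same $L$ and $\varepsilon$).
   Context: Let $d\in\mathbb N$, $\mathcal A$ a finite set, $(\mathcal A^{\mathbb N},\Sigma)$ the sequence space with product $\sigma$-algebra, coordinates $A_n(\bar a)=a_n$ and $A_{1:L}=(A_1,\dots,A_L)$. $(\Omega,\mathcal F,\mathbb P)$ is a probability space and $\theta:\Omega\to\Omega$ is measurable and $\mathbb P$-preserving. For each $a\in\mathcal A$, $\omega\mapsto V_{a;\omega}\in M_d(\mathbb C)$ is measurable with $\sum_aV_{a;\omega}^*V_{a;\omega}=I$ $\mathbb P$-a.s.; $\mathcal T_{a;\omega}(X)=V_{a;\omega}XV_{a;\omega}^*$. For a density matrix $\rho$, the quenched law $\mathbb Q_{\rho;\omega}$ is the probability on $\Sigma$ with $\mathbb Q_{\rho;\omega}(A_1=a_1,\dots,A_n=a_n)=\operatorname{tr}[(\mathcal T_{a_n;\theta^n\omega}\circ\cdots\circ\mathcal T_{a_1;\theta\omega})(\rho)]$. For a word $u=(u_1,\dots,u_L)$, $f_u:=f_{u_L}\circ\cdots\circ f_{u_1}$. $\mathcal P(X)$ denotes the probability measures on a finite set $X$; a coupling of $\mu,\nu$ is a probability on the product with marginals $\mu$ and $\nu$. *)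

theory Defs
  imports "HOL-Probability.Probability"
begin

text \<open>Complex d x d matrices are rendered as complex^'n^'n with a finite index
type 'n (so d = CARD('n)); the alphabet is a finite type 'a.\<close>

definition cadj :: "complex^'n^'m \<Rightarrow> complex^'m^'n" where
  "cadj A = (\<chi> i j. cnj (A $ j $ i))"

definition ctrace :: "complex^'n^'n \<Rightarrow> complex" where
  "ctrace A = (\<Sum>i\<in>UNIV. A $ i $ i)"

definition hinner :: "complex^'n \<Rightarrow> complex^'n \<Rightarrow> complex" where
  "hinner x y = (\<Sum>k\<in>UNIV. cnj (x $ k) * y $ k)"

definition proj :: "complex^'n \<Rightarrow> complex^'n^'n" where
  "proj e = (\<chi> r s. e $ r * cnj (e $ s))"

definition kraus :: "('a \<Rightarrow> 'w \<Rightarrow> complex^'n^'n) \<Rightarrow> 'a \<Rightarrow> 'w \<Rightarrow> complex^'n^'n \<Rightarrow> complex^'n^'n" where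
  "kraus V a w X = V a w ** X ** cadj (V a w)"

text \<open>qevol V th w n u rho applies T_{u_1; th^(n+1) w}, then T_{u_2; th^(n+2) w}, ...\<close>
fun qevol :: "('a \<Rightarrow> 'w \<Rightarrow> complex^'n^'n) \<Rightarrow> ('w \<Rightarrow> 'w) \<Rightarrow> 'w \<Rightarrow> nat \<Rightarrow> 'a list
    \<Rightarrow> complex^'n^'n \<Rightarrow> complex^'n^'n" where
  "qevol V th w n [] rho = rho"
| "qevol V th w n (a # u) rho = qevol V th w (Suc n) u (kraus V a ((th ^^ Suc n) w) rho)"

text \<open>Quenched law of the first length u letters:
  Q_{rho;w}(A_1 = u_1, ..., A_n = u_n) = tr[(T_{u_n;th^n w} o ... o T_{u_1;th w})(rho)].
  (The trace is real under the standing assumptions; we take its real part.)\<close>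
definition qlaw :: "('a \<Rightarrow> 'w \<Rightarrow> complex^'n^'n) \<Rightarrow> ('w \<Rightarrow> 'w) \<Rightarrow> complex^'n^'n \<Rightarrow> 'w \<Rightarrow> 'a list \<Rightarrow> real" where
  "qlaw V th rho w u = Re (ctrace (qevol V th w 0 u rho))"

definition words :: "nat \<Rightarrow> 'a list set" where
  "words L = {u. length u = L}"

definition fword :: "('a \<Rightarrow> 'n \<Rightarrow> 'n) \<Rightarrow> 'a list \<Rightarrow> 'n \<Rightarrow> 'n" where
  "fword f u i = foldl (\<lambda>k a. f a k) i u"

definition Pbar :: "('a \<Rightarrow> 'w \<Rightarrow> complex^'n^'n) \<Rightarrow> ('w \<Rightarrow> 'w) \<Rightarrow> ('n \<Rightarrow> complex^'n)
    \<Rightarrow> ('a \<Rightarrow> 'n \<Rightarrow> 'n) \<Rightarrow> nat \<Rightarrow> 'w \<Rightarrow> 'n \<Rightarrow> 'n \<Rightarrow> real" where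
  "Pbar V th e f L w i k = (\<Sum>u\<in>{u\<in>words L. fword f u i = k}. qlaw V th (proj (e i)) w u)"

end

theory Submission
  imports Defs
begin


definition fib :: "'x set \<Rightarrow> ('x \<Rightarrow> 'k) \<Rightarrow> ('x \<Rightarrow> real) \<Rightarrow> 'k \<Rightarrow> real" where
  "fib W g P k = (\<Sum>u\<in>{u\<in>W. g u = k}. P u)"

definition mm :: "'x set \<Rightarrow> ('x \<Rightarrow> 'k) \<Rightarrow> ('x \<Rightarrow> 'k) \<Rightarrow> ('x \<Rightarrow> real) \<Rightarrow> ('x \<Rightarrow> real) \<Rightarrow> 'k \<Rightarrow> real" where
  "mm W g h P Q k = min (fib W g P k) (fib W h Q k)"

definition mpart :: "'x set \<Rightarrow> ('x \<Rightarrow> 'k) \<Rightarrow> ('x \<Rightarrow> 'k) \<Rightarrow> ('x \<Rightarrow> real) \<Rightarrow> ('x \<Rightarrow> real) \<Rightarrow> 'x \<Rightarrow> real" where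
  "mpart W g h P Q u = mm W g h P Q (g u) * (P u / fib W g P (g u))"

definition cpl :: "'x set \<Rightarrow> ('x \<Rightarrow> 'k::finite) \<Rightarrow> ('x \<Rightarrow> 'k) \<Rightarrow> ('x \<Rightarrow> real) \<Rightarrow> ('x \<Rightarrow> real) \<Rightarrow> 'x \<times> 'x \<Rightarrow> real" where
  "cpl W g h P Q x = (if fst x \<in> W \<and> snd x \<in> W then
     (if g (fst x) = h (snd x) then mpart W g h P Q (fst x) * (Q (snd x) / fib W h Q (h (snd x))) else 0)
     + (P (fst x) - mpart W g h P Q (fst x)) * (Q (snd x) - mpart W h g Q P (snd x))
        / (1 - (\<Sum>k\<in>UNIV. mm W g h P Q k)) else 0)"

lemma mm_sym: "mm W h g Q P = mm W g h P Q"
  by (auto simp: mm_def fun_eq_iff)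

lemma cpl_swap: "cpl W g h P Q (u, v) = cpl W h g Q P (v, u)"
  by (auto simp: cpl_def mm_sym mpart_def mult_ac)

lemma fib_group:
  assumes "finite W"
  shows "(\<Sum>v\<in>W. \<phi> (h v) * Q v) = (\<Sum>k\<in>(UNIV::'k::finite set). \<phi> k * fib W h Q k)"
proof -
  have "(\<Sum>v\<in>W. \<phi> (h v) * Q v) = (\<Sum>k\<in>UNIV. \<Sum>v\<in>{v\<in>W. h v = k}. \<phi> (h v) * Q v)"
    by (rule sum.group[symmetric]) (use assms in auto)
  also have "\<dots> = (\<Sum>k\<in>(UNIV::'k set). \<phi> k * fib W h Q k)"
    by (rule sum.cong) (auto simp: fib_def sum_distrib_left)
  finally show ?thesis .
qed

locale cpl_ctx =
  fixes W :: "'x set" and g h :: "'x \<Rightarrow> 'k::finite" and P Q :: "'x \<Rightarrow> real"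
  assumes fin: "finite W"
    and Pnn: "\<And>u. u \<in> W \<Longrightarrow> 0 \<le> P u" and Qnn: "\<And>u. u \<in> W \<Longrightarrow> 0 \<le> Q u"
    and P1: "sum P W = 1" and Q1: "sum Q W = 1"
begin

lemma fib_nn: "0 \<le> fib W g P k" "0 \<le> fib W h Q k"
  unfolding fib_def by (auto intro!: sum_nonneg Pnn Qnn)

lemma sum_fibP: "(\<Sum>k\<in>UNIV. fib W g P k) = 1"
  using fib_group[OF fin, of "\<lambda>_. 1" g P] P1 by simp

lemma P_le_fib: "u \<in> W \<Longrightarrow> P u \<le> fib W g P (g u)"
  unfolding fib_def by (rule member_le_sum) (auto intro: Pnn simp: fin)

lemma mm_le1: "(\<Sum>k\<in>UNIV. mm W g h P Q k) \<le> 1"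
proof -
  have "(\<Sum>k\<in>UNIV. mm W g h P Q k) \<le> (\<Sum>k\<in>UNIV. fib W g P k)"
    by (rule sum_mono) (auto simp: mm_def)
  then show ?thesis using sum_fibP by simp
qed

lemma mm_nn: "0 \<le> mm W g h P Q k"
  using fib_nn by (simp add: mm_def)

lemma mpart_nn: "u \<in> W \<Longrightarrow> 0 \<le> mpart W g h P Q u"
  using mm_nn fib_nn Pnn by (simp add: mpart_def)

lemma mpart_le: "u \<in> W \<Longrightarrow> mpart W g h P Q u \<le> P u"
proof -
  assume u: "u \<in> W"
  let ?p = "fib W g P (g u)"
  have "mm W g h P Q (g u) \<le> ?p" by (simp add: mm_def)
  show ?thesis
  proof (cases "?p = 0")
    case True then show ?thesis using u Pnn by (simp add: mpart_def)
  next
    case False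
    then have "?p > 0" using fib_nn(1)[of "g u"] by simp
    have "mm W g h P Q (g u) * (P u / ?p) \<le> ?p * (P u / ?p)"
      by (rule mult_right_mono) (use \<open>mm W g h P Q (g u) \<le> ?p\<close> u Pnn \<open>?p > 0\<close> in auto)
    then show ?thesis using False by (simp add: mpart_def)
  qed
qed

lemma cpl_nn: "0 \<le> cpl W g h P Q x"
proof -
  interpret s: cpl_ctx W h g Q P using fin Pnn Qnn P1 Q1 by unfold_locales auto
  have m: "0 \<le> 1 - (\<Sum>k\<in>UNIV. mm W g h P Q k)" using mm_le1 by simp
  show ?thesis unfolding cpl_def
    using mpart_nn mpart_le s.mpart_le Pnn Qnn m fib_nn
    by (auto intro!: add_nonneg_nonneg mult_nonneg_nonneg divide_nonneg_nonneg)
qed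

lemma fib_sum_if: "(\<Sum>v\<in>W. if h v = k then F v else 0) = (\<Sum>v\<in>{v\<in>W. h v = k}. F v)"
  using fin by (simp add: sum.inter_filter)

lemma first_sum: "u \<in> W \<Longrightarrow> (\<Sum>v\<in>W. if g u = h v then mpart W g h P Q u * (Q v / fib W h Q (h v)) else 0) = mpart W g h P Q u"
proof -
  assume u: "u \<in> W"
  let ?k = "g u"
  have "(\<Sum>v\<in>W. if g u = h v then mpart W g h P Q u * (Q v / fib W h Q (h v)) else 0)
     = (\<Sum>v\<in>W. if h v = ?k then mpart W g h P Q u / fib W h Q ?k * Q v else 0)"
    by (rule sum.cong) auto
  also have "\<dots> = mpart W g h P Q u / fib W h Q ?k * fib W h Q ?k"
    unfolding fib_sum_if by (simp add: fib_def sum_distrib_left)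
  also have "\<dots> = mpart W g h P Q u"
  proof (cases "fib W h Q ?k = 0")
    case True
    then have "mm W g h P Q ?k = 0" using fib_nn(1)[of ?k] by (simp add: mm_def)
    then show ?thesis using True by (simp add: mpart_def)
  qed simp
  finally show ?thesis .
qed

lemma sum_mpart: "(\<Sum>u\<in>W. mpart W g h P Q u) = (\<Sum>k\<in>UNIV. mm W g h P Q k)"
proof -
  have "(\<Sum>u\<in>W. mpart W g h P Q u) = (\<Sum>u\<in>W. (mm W g h P Q (g u) / fib W g P (g u)) * P u)"
    by (simp add: mpart_def)
  also have "\<dots> = (\<Sum>k\<in>UNIV. mm W g h P Q k / fib W g P k * fib W g P k)"
    by (rule fib_group[OF fin])
  also have "\<dots> = (\<Sum>k\<in>UNIV. mm W g h P Q k)"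
  proof (rule sum.cong)
    fix k show "mm W g h P Q k / fib W g P k * fib W g P k = mm W g h P Q k"
      using fib_nn(2)[of k] by (cases "fib W g P k = 0") (auto simp: mm_def)
  qed simp
  finally show ?thesis .
qed

lemma marg1: "u \<in> W \<Longrightarrow> (\<Sum>v\<in>W. cpl W g h P Q (u, v)) = P u"
proof -
  assume u: "u \<in> W"
  interpret s: cpl_ctx W h g Q P using fin Pnn Qnn P1 Q1 by unfold_locales auto
  let ?m = "\<Sum>k\<in>UNIV. mm W g h P Q k"
  have sm: "(\<Sum>v\<in>W. mpart W h g Q P v) = ?m"
    using s.sum_mpart by (simp add: mm_sym)
  have "(\<Sum>v\<in>W. cpl W g h P Q (u, v)) =
     (\<Sum>v\<in>W. if g u = h v then mpart W g h P Q u * (Q v / fib W h Q (h v)) else 0)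
     + (P u - mpart W g h P Q u) / (1 - ?m) * (\<Sum>v\<in>W. Q v - mpart W h g Q P v)"
    using u by (auto simp: cpl_def sum.distrib sum_distrib_left intro!: sum.cong)
  also have "\<dots> = mpart W g h P Q u + (P u - mpart W g h P Q u) / (1 - ?m) * (1 - ?m)"
    using first_sum[OF u] sm Q1 by (simp add: sum_subtractf)
  also have "\<dots> = P u"
  proof (cases "?m = 1")
    case False then show ?thesis by simp
  next
    case True
    have "(\<Sum>k\<in>UNIV. fib W g P k - mm W g h P Q k) = 0"
      using True sum_fibP by (simp add: sum_subtractf)
    then have "\<forall>k\<in>UNIV. fib W g P k - mm W g h P Q k = 0"
      by (subst sum_nonneg_eq_0_iff[symmetric]) (auto simp: mm_def)
    then have eq: "mm W g h P Q (g u) = fib W g P (g u)" by auto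
    have "mpart W g h P Q u = P u"
    proof (cases "fib W g P (g u) = 0")
      case True
      then have "P u = 0" using P_le_fib[OF u] Pnn[OF u] by simp
      then show ?thesis by (simp add: mpart_def)
    next
      case False then show ?thesis by (simp add: mpart_def eq)
    qed
    then show ?thesis by simp
  qed
  finally show ?thesis .
qed

lemma marg2: "v \<in> W \<Longrightarrow> (\<Sum>u\<in>W. cpl W g h P Q (u, v)) = Q v"
proof -
  interpret s: cpl_ctx W h g Q P using fin Pnn Qnn P1 Q1 by unfold_locales auto
  assume "v \<in> W"
  then show ?thesis using s.marg1[of v] by (simp add: cpl_swap)
qed

lemma total: "(\<Sum>x\<in>W\<times>W. cpl W g h P Q x) = 1"
proof -
  have "(\<Sum>x\<in>W\<times>W. cpl W g h P Q x) = (\<Sum>u\<in>W. \<Sum>v\<in>W. cpl W g h P Q (u, v))"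
    by (simp add: sum.cartesian_product case_prod_beta')
  then show ?thesis using marg1 P1 by simp
qed

lemma pmf_cpl: "pmf (embed_pmf (cpl W g h P Q)) x = cpl W g h P Q x"
  and set_cpl: "set_pmf (embed_pmf (cpl W g h P Q)) \<subseteq> W \<times> W"
proof -
  have nn: "\<And>x. 0 \<le> cpl W g h P Q x" by (rule cpl_nn)
  have "(\<integral>\<^sup>+x. ennreal (cpl W g h P Q x) \<partial>count_space UNIV) = (\<Sum>x\<in>W\<times>W. ennreal (cpl W g h P Q x))"
    by (rule nn_integral_count_space') (auto simp: fin cpl_def)
  also have "\<dots> = 1" using total nn by simp
  finally have i: "(\<integral>\<^sup>+x. ennreal (cpl W g h P Q x) \<partial>count_space UNIV) = 1" .
  show "pmf (embed_pmf (cpl W g h P Q)) x = cpl W g h P Q x"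
    by (rule pmf_embed_pmf[OF nn i])
  show "set_pmf (embed_pmf (cpl W g h P Q)) \<subseteq> W \<times> W"
    by (subst set_embed_pmf[OF nn i]) (auto simp: cpl_def split: if_splits)
qed

lemma diag: "(\<Sum>x\<in>W\<times>W. if g (fst x) = h (snd x) then cpl W g h P Q x else 0) \<ge> (\<Sum>k\<in>UNIV. mm W g h P Q k)"
proof -
  interpret s: cpl_ctx W h g Q P using fin Pnn Qnn P1 Q1 by unfold_locales auto
  let ?m = "\<Sum>k\<in>UNIV. mm W g h P Q k"
  have m: "0 \<le> 1 - ?m" using mm_le1 by simp
  have "?m = (\<Sum>u\<in>W. \<Sum>v\<in>W. if g u = h v then mpart W g h P Q u * (Q v / fib W h Q (h v)) else 0)"
    using first_sum sum_mpart by simp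
  also have "\<dots> = (\<Sum>x\<in>W\<times>W. if g (fst x) = h (snd x) then mpart W g h P Q (fst x) * (Q (snd x) / fib W h Q (h (snd x))) else 0)"
    by (simp add: sum.cartesian_product case_prod_beta)
  also have "\<dots> \<le> (\<Sum>x\<in>W\<times>W. if g (fst x) = h (snd x) then cpl W g h P Q x else 0)"
  proof (rule sum_mono)
    fix x assume x: "x \<in> W \<times> W"
    have "0 \<le> (P (fst x) - mpart W g h P Q (fst x)) * (Q (snd x) - mpart W h g Q P (snd x)) / (1 - ?m)"
      using x mpart_le s.mpart_le m by (auto intro!: mult_nonneg_nonneg divide_nonneg_nonneg)
    then show "(if g (fst x) = h (snd x) then mpart W g h P Q (fst x) * (Q (snd x) / fib W h Q (h (snd x))) else 0)
       \<le> (if g (fst x) = h (snd x) then cpl W g h P Q x else 0)"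
      using x by (auto simp: cpl_def)
  qed
  finally show ?thesis .
qed

end


fun vevol :: "('a \<Rightarrow> 'w \<Rightarrow> complex^'n^'n) \<Rightarrow> ('w \<Rightarrow> 'w) \<Rightarrow> 'w \<Rightarrow> nat \<Rightarrow> 'a list
    \<Rightarrow> complex^'n \<Rightarrow> complex^'n" where
  "vevol V th w n [] x = x"
| "vevol V th w n (a # u) x = vevol V th w (Suc n) u (V a ((th ^^ Suc n) w) *v x)"

definition csq :: "complex^'n \<Rightarrow> complex" where
  "csq y = (\<Sum>k\<in>UNIV. y $ k * cnj (y $ k))"

lemma kraus_proj: "kraus V a w (proj x) = proj (V a w *v x)"
  unfolding kraus_def proj_def cadj_def
  by (simp add: vec_eq_iff matrix_matrix_mult_def matrix_vector_mult_def
      sum_distrib_left sum_distrib_right sum_product mult_ac)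

lemma qevol_proj: "qevol V th w n u (proj x) = proj (vevol V th w n u x)"
  by (induction u arbitrary: n x) (auto simp: kraus_proj)

lemma ctrace_proj: "ctrace (proj y) = csq y"
  by (simp add: ctrace_def proj_def csq_def)

lemma Re_csq: "Re (csq y) = (\<Sum>k\<in>UNIV. (cmod (y $ k))^2)"
  by (simp add: csq_def flip: complex_norm_square)

lemma csq_real: "csq y = complex_of_real (Re (csq y))"
  unfolding csq_def complex_norm_square[symmetric] of_real_sum[symmetric] by simp

lemma qlaw_eq: "qlaw V th (proj x) w u = (\<Sum>k\<in>UNIV. (cmod (vevol V th w 0 u x $ k))^2)"
  by (simp add: qlaw_def qevol_proj ctrace_proj Re_csq)

lemma qlaw_nn: "0 \<le> qlaw V th (proj x) w u"
  by (simp add: qlaw_eq sum_nonneg)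

lemma csq_mv: "csq (B *v x) = (\<Sum>i\<in>UNIV. \<Sum>j\<in>UNIV. x$i * cnj (x$j) * ((cadj B ** B) $ j $ i))"
proof -
  have "csq (B *v x) = (\<Sum>k\<in>UNIV. \<Sum>i\<in>UNIV. \<Sum>j\<in>UNIV. x$i * cnj (x$j) * (cnj (B$k$j) * B$k$i))"
    unfolding csq_def matrix_vector_mult_def
    by (simp add: sum_distrib_left sum_distrib_right mult_ac) (rule sum.cong[OF refl], rule sum.swap)
  also have "\<dots> = (\<Sum>i\<in>UNIV. \<Sum>k\<in>UNIV. \<Sum>j\<in>UNIV. x$i * cnj (x$j) * (cnj (B$k$j) * B$k$i))"
    by (rule sum.swap)
  also have "\<dots> = (\<Sum>i\<in>UNIV. \<Sum>j\<in>UNIV. \<Sum>k\<in>UNIV. x$i * cnj (x$j) * (cnj (B$k$j) * B$k$i))"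
    by (rule sum.cong[OF refl], rule sum.swap)
  also have "\<dots> = (\<Sum>i\<in>UNIV. \<Sum>j\<in>UNIV. x$i * cnj (x$j) * ((cadj B ** B) $ j $ i))"
    by (simp add: cadj_def matrix_matrix_mult_def sum_distrib_left)
  finally show ?thesis .
qed

lemma complete_csq:
  assumes "(\<Sum>a\<in>UNIV. cadj (A a) ** A a) = mat 1"
  shows "(\<Sum>a\<in>(UNIV::'a::finite set). csq (A a *v x)) = csq x"
proof -
  have "(\<Sum>a\<in>(UNIV::'a set). csq (A a *v x))
      = (\<Sum>i\<in>UNIV. \<Sum>j\<in>UNIV. x$i * cnj (x$j) * ((\<Sum>a\<in>UNIV. cadj (A a) ** A a) $ j $ i))"
    unfolding csq_mv sum_component
    by (simp add: sum_distrib_left sum.swap[of _ "UNIV::'a set"])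
  also have "\<dots> = csq x"
    unfolding assms by (simp add: mat_def csq_def if_distrib cong: if_cong)
  finally show ?thesis .
qed

lemma words_Suc: "words (Suc L) = (\<lambda>(a, u). a # u) ` (UNIV \<times> words L)"
  unfolding words_def by (auto simp: image_iff length_Suc_conv)

lemma finite_words: "finite (words L :: 'a::finite list set)"
  unfolding words_def by (rule finite_list_length)

lemma sum_words_Suc: "(\<Sum>u\<in>words (Suc L). F u) = (\<Sum>a\<in>(UNIV::'a::finite set). \<Sum>u\<in>words L. F (a # u))"
proof -
  have "inj_on (\<lambda>(a, u). a # u) (UNIV \<times> words L)" by (auto simp: inj_on_def)
  then have "(\<Sum>u\<in>words (Suc L). F u) = (\<Sum>x\<in>UNIV \<times> words L. F (fst x # snd x))"
    unfolding words_Suc by (subst sum.reindex) (auto simp: case_prod_beta)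
  also have "\<dots> = (\<Sum>a\<in>(UNIV::'a set). \<Sum>u\<in>words L. F (a # u))"
    by (simp add: sum.cartesian_product case_prod_beta)
  finally show ?thesis .
qed

lemma sum_words:
  fixes V :: "'a::finite \<Rightarrow> 'w \<Rightarrow> complex^'n^'n"
  assumes "\<forall>m. (\<Sum>a\<in>UNIV. cadj (V a ((th ^^ m) w)) ** V a ((th ^^ m) w)) = mat 1"
  shows "(\<Sum>u\<in>words L. csq (vevol V th w n u x)) = csq x"
proof (induction L arbitrary: n x)
  case 0
  then show ?case by (simp add: words_def)
next
  case (Suc L)
  have "(\<Sum>u\<in>words (Suc L). csq (vevol V th w n u x))
      = (\<Sum>a\<in>UNIV. csq (V a ((th ^^ Suc n) w) *v x))"
    unfolding sum_words_Suc by (simp add: Suc.IH)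
  also have "\<dots> = csq x" by (rule complete_csq) (use assms in blast)
  finally show ?case .
qed

lemma AE_pull:
  assumes T: "T \<in> measurable M M" and D: "distr M M T = M" and P: "AE x in M. P x"
  shows "AE x in M. P (T x)"
proof -
  from P obtain N where N: "{x \<in> space M. \<not> P x} \<subseteq> N" "N \<in> null_sets M"
    by (rule AE_E) auto
  have "emeasure M (T -` N \<inter> space M) = emeasure (distr M M T) N"
    using N T by (simp add: emeasure_distr null_setsD2)
  also have "\<dots> = 0" using D N by (simp add: null_setsD1)
  finally have "T -` N \<inter> space M \<in> null_sets M"
    using N T by (auto intro: measurable_sets)
  moreover have "{x \<in> space M. \<not> P (T x)} \<subseteq> T -` N \<inter> space M"
    using N T by (auto dest: measurable_space)
  ultimately show ?thesis by (rule AE_I')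
qed

lemma funpow_meas:
  assumes T: "T \<in> measurable M M" and D: "distr M M T = M"
  shows "T ^^ m \<in> measurable M M \<and> distr M M (T ^^ m) = M"
proof (induction m)
  case 0
  then show ?case by (simp add: distr_id2 id_def)
next
  case (Suc m)
  have eq: "T ^^ Suc m = (T ^^ m) \<circ> T" by (rule funpow_Suc_right)
  have m1: "T ^^ Suc m \<in> measurable M M" unfolding eq using Suc T by (auto intro: measurable_comp)
  have "distr M M (T ^^ Suc m) = distr (distr M M T) M (T ^^ m)"
    unfolding eq using Suc T by (subst distr_distr) auto
  then have "distr M M (T ^^ Suc m) = M" using Suc D by (simp del: funpow.simps)
  then show ?case using m1 by blast
qed

lemma vevol_meas:
  fixes V :: "'a::finite \<Rightarrow> 'w \<Rightarrow> complex^'n::finite^'n"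
  assumes T: "T \<in> measurable M M" and Vm: "\<And>a. V a \<in> borel_measurable M"
    and X: "\<And>k. (\<lambda>w. X w $ k) \<in> borel_measurable M"
  shows "(\<lambda>w. vevol V T w n u (X w) $ k) \<in> borel_measurable M"
  using X
proof (induction u arbitrary: n X k)
  case Nil
  then show ?case by simp
next
  case (Cons a u)
  have Tm: "T ^^ Suc n \<in> measurable M M" using T by (induction n) (auto simp del: funpow.simps intro: measurable_comp simp: funpow_Suc_right)
  have cV: "\<And>i j. (\<lambda>w. V a ((T ^^ Suc n) w) $ i $ j) \<in> borel_measurable M"
  proof -
    fix i j
    have c: "continuous_on UNIV (\<lambda>A::complex^'n^'n. A $ i $ j)"
      by (intro continuous_intros)
    have "(\<lambda>w. V a ((T ^^ Suc n) w)) \<in> borel_measurable M"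
      using measurable_comp[OF Tm Vm[of a]] by (simp add: comp_def)
    then show "(\<lambda>w. V a ((T ^^ Suc n) w) $ i $ j) \<in> borel_measurable M"
      by (rule borel_measurable_continuous_on[OF c])
  qed
  have "\<And>k. (\<lambda>w. (V a ((T ^^ Suc n) w) *v X w) $ k) \<in> borel_measurable M"
    unfolding matrix_vector_mult_def using cV Cons.prems by simp
  then show ?case by (simp add: Cons.IH)
qed


lemma prob_finite_support:
  assumes "set_pmf p \<subseteq> B" "finite B"
  shows "measure_pmf.prob p A = sum (pmf p) (A \<inter> B)"
proof -
  have "measure_pmf.prob p A = measure_pmf.prob p (A \<inter> set_pmf p)" by (simp add: measure_Int_set_pmf)
  also have "A \<inter> set_pmf p = (A \<inter> B) \<inter> set_pmf p" using assms by auto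
  also have "measure_pmf.prob p \<dots> = measure_pmf.prob p (A \<inter> B)" by (simp add: measure_Int_set_pmf)
  also have "\<dots> = sum (pmf p) (A \<inter> B)" using assms by (simp add: measure_measure_pmf_finite)
  finally show ?thesis .
qed
theorem proposition5:
  fixes M :: "'w measure"
    and th :: "'w \<Rightarrow> 'w"
    and V :: "'a::finite \<Rightarrow> 'w \<Rightarrow> complex^'n::finite^'n"
    and e :: "'n \<Rightarrow> complex^'n"
    and f :: "'a \<Rightarrow> 'n \<Rightarrow> 'n"
    and L :: nat
    and eps :: real
  assumes "prob_space M"
    and "th \<in> measurable M M" and "distr M M th = M"
    and "\<And>a. V a \<in> borel_measurable M"
    and "AE w in M. (\<Sum>a\<in>UNIV. cadj (V a w) ** V a w) = mat 1"
    and "\<And>i j. hinner (e i) (e j) = (if i = j then 1 else 0)"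
    and "\<And>a. AE w in M. (\<forall>i. \<exists>c. V a w *v e i = c *s e (f a i))
                      \<and> (\<forall>i j. i \<noteq> j \<longrightarrow> hinner (V a w *v e i) (V a w *v e j) = 0)"
    and "eps > 0"
    and "AE w in M. \<forall>i j. (\<Sum>k\<in>UNIV. min (Pbar V th e f L w i k) (Pbar V th e f L w j k)) \<ge> eps"
  shows "\<exists>\<kappa> :: 'n \<Rightarrow> 'n \<Rightarrow> 'w \<Rightarrow> ('a list \<times> 'a list) pmf.
           (\<forall>i j x. (\<lambda>w. pmf (\<kappa> i j w) x) \<in> borel_measurable M)
         \<and> (\<forall>i j w. set_pmf (\<kappa> i j w) \<subseteq> words L \<times> words L)
         \<and> (AE w in M. \<forall>i j.
               (\<forall>u\<in>words L. pmf (map_pmf fst (\<kappa> i j w)) u = qlaw V th (proj (e i)) w u)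
             \<and> (\<forall>v\<in>words L. pmf (map_pmf snd (\<kappa> i j w)) v = qlaw V th (proj (e j)) w v)
             \<and> measure_pmf.prob (\<kappa> i j w) {(u, v). fword f u i = fword f v j} \<ge> eps)"
proof -
  note Mp = assms(1) and thM = assms(2) and thd = assms(3) and Vm = assms(4) and compl = assms(5)
    and orth = assms(6) and epsA = assms(9)
  define W where "W = (words L :: 'a list set)"
  define Pw where "Pw i w = (\<lambda>u. qlaw V th (proj (e i)) w u)" for i w
  define g where "g i = (\<lambda>u. fword f u i)" for i
  define valid where "valid i j w \<longleftrightarrow> sum (Pw i w) W = 1 \<and> sum (Pw j w) W = 1" for i j w
  define u0 where "u0 = (replicate L undefined :: 'a list)"
  define \<kappa> where "\<kappa> i j w = (if valid i j w then embed_pmf (cpl W (g i) (g j) (Pw i w) (Pw j w))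
      else return_pmf (u0, u0))" for i j w
  have finW: "finite W" unfolding W_def by (rule finite_words)
  have u0W: "u0 \<in> W" by (simp add: u0_def W_def words_def)
  have ctx: "cpl_ctx W (Pw i w) (Pw j w)" if "valid i j w" for i j w
    using that finW by unfold_locales (auto simp: valid_def Pw_def qlaw_nn)
  have pmf\<kappa>: "pmf (\<kappa> i j w) x = (if valid i j w then cpl W (g i) (g j) (Pw i w) (Pw j w) x
      else indicator {(u0, u0)} x)" for i j w x
  proof (cases "valid i j w")
    case True
    then show ?thesis using cpl_ctx.pmf_cpl[OF ctx[OF True]] by (simp add: \<kappa>_def)
  qed (auto simp: \<kappa>_def split: split_indicator)
  have set\<kappa>: "set_pmf (\<kappa> i j w) \<subseteq> W \<times> W" for i j w
  proof (cases "valid i j w")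
    case True
    then show ?thesis using cpl_ctx.set_cpl[OF ctx[OF True]] by (simp add: \<kappa>_def)
  qed (use u0W in \<open>auto simp: \<kappa>_def\<close>)
  have Pm: "(\<lambda>w. Pw i w u) \<in> borel_measurable M" for i u
  proof -
    have "\<And>k. (\<lambda>w. vevol V th w 0 u (e i) $ k) \<in> borel_measurable M"
      by (rule vevol_meas[OF thM Vm]) simp
    then show ?thesis unfolding Pw_def qlaw_eq by measurable
  qed
  have meas: "(\<lambda>w. pmf (\<kappa> i j w) x) \<in> borel_measurable M" for i j x
    unfolding pmf\<kappa> valid_def cpl_def mpart_def mm_def fib_def
    using Pm by measurable
  have ae1: "AE w in M. \<forall>m. (\<Sum>a\<in>UNIV. cadj (V a ((th ^^ m) w)) ** V a ((th ^^ m) w)) = mat 1"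
    unfolding AE_all_countable
  proof
    fix m
    show "AE w in M. (\<Sum>a\<in>UNIV. cadj (V a ((th ^^ m) w)) ** V a ((th ^^ m) w)) = mat 1"
      using funpow_meas[OF thM thd, of m] by (intro AE_pull[OF _ _ compl]) auto
  qed
  have main: "\<forall>i j.
               (\<forall>u\<in>words L. pmf (map_pmf fst (\<kappa> i j w)) u = qlaw V th (proj (e i)) w u)
             \<and> (\<forall>v\<in>words L. pmf (map_pmf snd (\<kappa> i j w)) v = qlaw V th (proj (e j)) w v)
             \<and> measure_pmf.prob (\<kappa> i j w) {(u, v). fword f u i = fword f v j} \<ge> eps"
    if c1: "\<forall>m. (\<Sum>a\<in>UNIV. cadj (V a ((th ^^ m) w)) ** V a ((th ^^ m) w)) = mat 1"
    and c2: "\<forall>i j. (\<Sum>k\<in>UNIV. min (Pbar V th e f L w i k) (Pbar V th e f L w j k)) \<ge> eps" for w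
  proof (intro allI)
    fix i j
    have sum1: "sum (Pw i w) W = 1" for i
    proof -
      have "sum (Pw i w) W = Re (\<Sum>u\<in>words L. csq (vevol V th w 0 u (e i)))"
        by (simp add: Pw_def W_def qlaw_eq Re_csq)
      also have "\<dots> = Re (csq (e i))" using sum_words[OF c1] by simp
      also have "csq (e i) = hinner (e i) (e i)" by (simp add: csq_def hinner_def mult.commute)
      finally show ?thesis using orth[of i i] by simp
    qed
    have v: "valid i j w" using sum1 by (simp add: valid_def)
    interpret c: cpl_ctx W "g i" "g j" "Pw i w" "Pw j w" by (rule ctx[OF v])
    have k: "\<kappa> i j w = embed_pmf (cpl W (g i) (g j) (Pw i w) (Pw j w))" using v by (simp add: \<kappa>_def)
    have pr: "measure_pmf.prob (\<kappa> i j w) A = sum (cpl W (g i) (g j) (Pw i w) (Pw j w)) (A \<inter> (W \<times> W))" for A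
    proof -
      have "measure_pmf.prob (\<kappa> i j w) A = sum (pmf (\<kappa> i j w)) (A \<inter> (W \<times> W))"
        by (rule prob_finite_support[OF set\<kappa> finite_cartesian_product[OF finW finW]])
      also have "\<dots> = sum (cpl W (g i) (g j) (Pw i w) (Pw j w)) (A \<inter> (W \<times> W))"
        unfolding k by (rule sum.cong) (auto simp: c.pmf_cpl)
      finally show ?thesis .
    qed
    have m1: "pmf (map_pmf fst (\<kappa> i j w)) u = qlaw V th (proj (e i)) w u" if u: "u \<in> words L" for u
    proof -
      have "fst -` {u} \<inter> (W \<times> W) = Pair u ` W" using u by (auto simp: W_def)
      then have "pmf (map_pmf fst (\<kappa> i j w)) u = sum (cpl W (g i) (g j) (Pw i w) (Pw j w)) (Pair u ` W)"
        by (simp add: pmf_map pr)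
      also have "\<dots> = (\<Sum>v\<in>W. cpl W (g i) (g j) (Pw i w) (Pw j w) (u, v))"
        by (subst sum.reindex) (auto simp: inj_on_def)
      also have "\<dots> = Pw i w u" using c.marg1 u by (simp add: W_def)
      finally show ?thesis by (simp add: Pw_def)
    qed
    have m2: "pmf (map_pmf snd (\<kappa> i j w)) v = qlaw V th (proj (e j)) w v" if v: "v \<in> words L" for v
    proof -
      have "snd -` {v} \<inter> (W \<times> W) = (\<lambda>u. (u, v)) ` W" using v by (auto simp: W_def)
      then have "pmf (map_pmf snd (\<kappa> i j w)) v = sum (cpl W (g i) (g j) (Pw i w) (Pw j w)) ((\<lambda>u. (u, v)) ` W)"
        by (simp add: pmf_map pr)
      also have "\<dots> = (\<Sum>u\<in>W. cpl W (g i) (g j) (Pw i w) (Pw j w) (u, v))"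
        by (subst sum.reindex) (auto simp: inj_on_def)
      also have "\<dots> = Pw j w v" using c.marg2 v by (simp add: W_def)
      finally show ?thesis by (simp add: Pw_def)
    qed
    have "eps \<le> (\<Sum>k\<in>UNIV. min (Pbar V th e f L w i k) (Pbar V th e f L w j k))" using c2 by blast
    also have "\<dots> = (\<Sum>k\<in>UNIV. mm W (g i) (g j) (Pw i w) (Pw j w) k)"
      by (simp add: mm_def fib_def Pbar_def W_def g_def Pw_def)
    also have "\<dots> \<le> (\<Sum>x\<in>W\<times>W. if g i (fst x) = g j (snd x) then cpl W (g i) (g j) (Pw i w) (Pw j w) x else 0)"
      by (rule c.diag)
    also have "\<dots> = sum (cpl W (g i) (g j) (Pw i w) (Pw j w)) ({(u, v). fword f u i = fword f v j} \<inter> (W \<times> W))"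
    proof -
      have "{(u, v). fword f u i = fword f v j} \<inter> (W \<times> W) = {x \<in> W\<times>W. g i (fst x) = g j (snd x)}"
        by (auto simp: g_def)
      then show ?thesis using finW by (simp add: sum.inter_filter)
    qed
    also have "\<dots> = measure_pmf.prob (\<kappa> i j w) {(u, v). fword f u i = fword f v j}" by (simp add: pr)
    finally show "(\<forall>u\<in>words L. pmf (map_pmf fst (\<kappa> i j w)) u = qlaw V th (proj (e i)) w u)
             \<and> (\<forall>v\<in>words L. pmf (map_pmf snd (\<kappa> i j w)) v = qlaw V th (proj (e j)) w v)
             \<and> measure_pmf.prob (\<kappa> i j w) {(u, v). fword f u i = fword f v j} \<ge> eps"
      using m1 m2 by blast
  qed
  have "AE w in M. \<forall>i j.
               (\<forall>u\<in>words L. pmf (map_pmf fst (\<kappa> i j w)) u = qlaw V th (proj (e i)) w u)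
             \<and> (\<forall>v\<in>words L. pmf (map_pmf snd (\<kappa> i j w)) v = qlaw V th (proj (e j)) w v)
             \<and> measure_pmf.prob (\<kappa> i j w) {(u, v). fword f u i = fword f v j} \<ge> eps"
    using ae1 epsA by eventually_elim (rule main)
  then show ?thesis using meas set\<kappa> unfolding W_def by blast
qed

end
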